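(* Let $\Gamma$ be a finite group, $R$ a braided Hopf algebra in ${}^\Gamma_\Gamma\mathcal{YD}$, $A=R\#\Bbbk\Gamma$, and $\mathscr D\subseteq A^e$ the subalgebra generated by the elements $(r\#g)\otimes(s\#g^{-1})$ with $r,s\in R$, $g\in\Gamma$. Then $\mathscr D$ is a left $A$-submodule of $\mathcal L(A^e)$ and a right $A$-submodule of $\mathcal R(A^e)$.
   Context: $A^e=A\otimes A^{op}$. The map $\rho:A\to A^e$, $\rho(a)=a_1\otimes\mathcal S_A(a_2)$, is an algebra embedding; $\mathcal L(A^e)$ is $A^e$ with left $A$-action $a\cdot x=\rho(a)x$ (i.e. $a\cdot(x\otimes y)=a_1x\otimes y\,\mathcal S_A(a_2)$) and $\mathcal R(A^e)$ is $A^e$ with right $A$-action $x\cdot a=x\rho(a)$ (i.e. $(x\otimes y)\cdot a=xa_1\otimes\mathcal S_A(a_2)y$). $A$ is the bosonization with comultiplication $\Delta(r\#h)=\sum_{g}r^1\#gh\otimes(r^2)_g\#h$ and antipode $\mathcal S_A(r\#h)=\sum_g h^{-1}g^{-1}\mathcal S_R(r_g)$, where $R=\bigoplus_{g\in\Gamma}R_g$, $R_g=\{r:\delta(r)=g\otimes r\}$ for the coaction $\delta$, and $r_g$ is the $R_g$-component of $r$. *)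

theory Defs
  imports Complex_Main "HOL-Library.Function_Algebras"
begin

definition bilin ::
  "('k::field \<Rightarrow> 'a::ab_group_add \<Rightarrow> 'a) \<Rightarrow> ('k \<Rightarrow> 'b::ab_group_add \<Rightarrow> 'b)
   \<Rightarrow> ('k \<Rightarrow> 'c::ab_group_add \<Rightarrow> 'c) \<Rightarrow> ('a \<Rightarrow> 'b \<Rightarrow> 'c) \<Rightarrow> bool" where
  "bilin s1 s2 s3 f \<longleftrightarrow>
     (\<forall>x. Vector_Spaces.linear s2 s3 (f x)) \<and> (\<forall>y. Vector_Spaces.linear s1 s3 (\<lambda>x. f x y))"

text \<open>t : V \<times> W \<rightarrow> T is (a model of) the algebraic tensor product V \<otimes> W:
  t is bilinear, its image spans T, and for linearly independent families
  B, C the elements t b c (b in B, c in C) are pairwise distinct and linearly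
  independent.  This characterises the tensor product up to unique isomorphism.\<close>
definition is_tensor ::
  "('k::field \<Rightarrow> 'a::ab_group_add \<Rightarrow> 'a) \<Rightarrow> ('k \<Rightarrow> 'b::ab_group_add \<Rightarrow> 'b)
   \<Rightarrow> ('k \<Rightarrow> 'c::ab_group_add \<Rightarrow> 'c) \<Rightarrow> ('a \<Rightarrow> 'b \<Rightarrow> 'c) \<Rightarrow> bool" where
  "is_tensor s1 s2 s3 t \<longleftrightarrow>
     vector_space s1 \<and> vector_space s2 \<and> vector_space s3 \<and> bilin s1 s2 s3 t \<and>
     module.span s3 (case_prod t ` UNIV) = UNIV \<and>
     (\<forall>B C. \<not> module.dependent s1 B \<and> \<not> module.dependent s2 C \<longrightarrow>
        \<not> module.dependent s3 (case_prod t ` (B \<times> C)) \<and> inj_on (case_prod t) (B \<times> C))"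

text \<open>The group \<Gamma> is the type 'g with multiplication gm, unit ge, inverse gi.
  A left kG-comodule structure \<delta> : R \<rightarrow> kG \<otimes> R is written in the basis G of kG:
  \<delta>(r) = \<Sum>_g g \<otimes> co g r; thus co g r = r_g is the R_g-component of r.\<close>

definition YD_module ::
  "('g \<Rightarrow> 'g \<Rightarrow> 'g) \<Rightarrow> 'g \<Rightarrow> ('g \<Rightarrow> 'g) \<Rightarrow>
   ('k::field \<Rightarrow> 'r::ab_group_add \<Rightarrow> 'r) \<Rightarrow> ('g \<Rightarrow> 'r \<Rightarrow> 'r) \<Rightarrow> ('g \<Rightarrow> 'r \<Rightarrow> 'r) \<Rightarrow> bool" where
  "YD_module gm ge gi sR act co \<longleftrightarrow>
     vector_space sR \<and>
     \<comment> \<open>left kG-module\<close>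
     (\<forall>g. Vector_Spaces.linear sR sR (act g)) \<and>
     (\<forall>r. act ge r = r) \<and> (\<forall>g h r. act g (act h r) = act (gm g h) r) \<and>
     \<comment> \<open>left kG-comodule (coassociativity and counit written in the basis G)\<close>
     (\<forall>g. Vector_Spaces.linear sR sR (co g)) \<and>
     (\<forall>g h r. co h (co g r) = (if g = h then co g r else 0)) \<and>
     (\<forall>r. (\<Sum>g\<in>UNIV. co g r) = r) \<and>
     \<comment> \<open>Yetter-Drinfeld compatibility: \<delta>(g.r) = g r_{-1} g^{-1} \<otimes> g.r_0\<close>
     (\<forall>g h r. co (gm (gm g h) (gi g)) (act g r) = act g (co h r))"

definition braided_Hopf_YD ::
  "('g \<Rightarrow> 'g \<Rightarrow> 'g) \<Rightarrow> 'g \<Rightarrow> ('g \<Rightarrow> 'g) \<Rightarrow>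
   ('k::field \<Rightarrow> 'r::ab_group_add \<Rightarrow> 'r) \<Rightarrow> ('g \<Rightarrow> 'r \<Rightarrow> 'r) \<Rightarrow> ('g \<Rightarrow> 'r \<Rightarrow> 'r) \<Rightarrow>
   ('r \<Rightarrow> 'r \<Rightarrow> 'r) \<Rightarrow> 'r \<Rightarrow>
   ('k \<Rightarrow> 'rr::ab_group_add \<Rightarrow> 'rr) \<Rightarrow> ('r \<Rightarrow> 'r \<Rightarrow> 'rr) \<Rightarrow>
   ('k \<Rightarrow> 'rrr::ab_group_add \<Rightarrow> 'rrr) \<Rightarrow> ('rr \<Rightarrow> 'r \<Rightarrow> 'rrr) \<Rightarrow>
   ('r \<Rightarrow> 'rr) \<Rightarrow> ('r \<Rightarrow> 'k) \<Rightarrow> ('r \<Rightarrow> 'r) \<Rightarrow> bool" where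
  "braided_Hopf_YD gm ge gi sR act co m u sRR t sRRR t3 \<Delta> \<epsilon> S \<longleftrightarrow>
     group gm ge gi \<and> finite (UNIV :: 'g set) \<and>
     YD_module gm ge gi sR act co \<and>
     is_tensor sR sR sRR t \<and> is_tensor sRR sR sRRR t3 \<and>
     \<comment> \<open>associative unital algebra\<close>
     bilin sR sR sR m \<and>
     (\<forall>x y z. m (m x y) z = m x (m y z)) \<and> (\<forall>x. m u x = x \<and> m x u = x) \<and>
     \<comment> \<open>multiplication and unit are morphisms of YD-modules\<close>
     (\<forall>g x y. act g (m x y) = m (act g x) (act g y)) \<and> (\<forall>g. act g u = u) \<and>
     (\<forall>g x y. co g (m x y) = (\<Sum>h\<in>UNIV. m (co h x) (co (gm (gi h) g) y))) \<and>
     (\<forall>g. co g u = (if g = ge then u else 0)) \<and>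
     \<comment> \<open>coassociative counital coalgebra\<close>
     Vector_Spaces.linear sR sRR \<Delta> \<and> Vector_Spaces.linear sR (*) \<epsilon> \<and>
     (\<exists>L1 A2 L2.
        Vector_Spaces.linear sRR sRRR L1 \<and> (\<forall>a b. L1 (t a b) = t3 (\<Delta> a) b) \<and>
        bilin sR sRR sRRR A2 \<and> (\<forall>a b c. A2 a (t b c) = t3 (t a b) c) \<and>
        Vector_Spaces.linear sRR sRRR L2 \<and> (\<forall>a b. L2 (t a b) = A2 a (\<Delta> b)) \<and>
        (\<forall>r. L1 (\<Delta> r) = L2 (\<Delta> r))) \<and>
     (\<exists>E1 E2.
        Vector_Spaces.linear sRR sR E1 \<and> (\<forall>a b. E1 (t a b) = sR (\<epsilon> a) b) \<and>
        Vector_Spaces.linear sRR sR E2 \<and> (\<forall>a b. E2 (t a b) = sR (\<epsilon> b) a) \<and>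
        (\<forall>r. E1 (\<Delta> r) = r \<and> E2 (\<Delta> r) = r)) \<and>
     \<comment> \<open>comultiplication and counit are morphisms of YD-modules\<close>
     (\<forall>g. \<exists>Ag. Vector_Spaces.linear sRR sRR Ag \<and> (\<forall>a b. Ag (t a b) = t (act g a) (act g b)) \<and>
            (\<forall>r. \<Delta> (act g r) = Ag (\<Delta> r))) \<and>
     (\<forall>g. \<exists>Cg. Vector_Spaces.linear sRR sRR Cg \<and>
            (\<forall>a b. Cg (t a b) = (\<Sum>h\<in>UNIV. t (co h a) (co (gm (gi h) g) b))) \<and>
            (\<forall>r. \<Delta> (co g r) = Cg (\<Delta> r))) \<and>
     (\<forall>g r. \<epsilon> (act g r) = \<epsilon> r) \<and>
     (\<forall>g r. \<epsilon> (co g r) = (if g = ge then \<epsilon> r else 0)) \<and>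
     \<comment> \<open>\<Delta> and \<epsilon> are algebra maps, R \<otimes> R carrying the braided tensor product algebra
        structure (a \<otimes> b)(a' \<otimes> b') = a (b_{-1}.a') \<otimes> b_0 b'\<close>
     (\<exists>mRR. bilin sRR sRR sRR mRR \<and>
        (\<forall>a b a' b'. mRR (t a b) (t a' b') = (\<Sum>g\<in>UNIV. t (m a (act g a')) (m (co g b) b'))) \<and>
        (\<forall>x y. \<Delta> (m x y) = mRR (\<Delta> x) (\<Delta> y))) \<and>
     \<Delta> u = t u u \<and>
     (\<forall>x y. \<epsilon> (m x y) = \<epsilon> x * \<epsilon> y) \<and> \<epsilon> u = 1 \<and>
     \<comment> \<open>antipode: a morphism of YD-modules which is a convolution inverse of the identity\<close>
     Vector_Spaces.linear sR sR S \<and>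
     (\<forall>g r. S (act g r) = act g (S r)) \<and> (\<forall>g r. S (co g r) = co g (S r)) \<and>
     (\<exists>M1 M2.
        Vector_Spaces.linear sRR sR M1 \<and> (\<forall>a b. M1 (t a b) = m (S a) b) \<and>
        Vector_Spaces.linear sRR sR M2 \<and> (\<forall>a b. M2 (t a b) = m a (S b)) \<and>
        (\<forall>r. M1 (\<Delta> r) = sR (\<epsilon> r) u \<and> M2 (\<Delta> r) = sR (\<epsilon> r) u))"

text \<open>Since \<Gamma> is finite and k\<Gamma> has basis \<Gamma>, the vector space R \<otimes> k\<Gamma> is modelled by
  functions x : \<Gamma> \<rightarrow> R, with x = \<Sum>_g x(g) # g.\<close>

definition smash :: "'r::zero \<Rightarrow> 'g \<Rightarrow> ('g \<Rightarrow> 'r)" where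
  "smash r g = (\<lambda>h. if h = g then r else 0)"

definition scA :: "('k \<Rightarrow> 'r \<Rightarrow> 'r) \<Rightarrow> 'k \<Rightarrow> ('g \<Rightarrow> 'r) \<Rightarrow> ('g \<Rightarrow> 'r)" where
  "scA sR c x = (\<lambda>h. sR c (x h))"

text \<open>Smash product multiplication (r # g)(s # h) = r (g.s) # gh, extended bilinearly.\<close>
definition bos_mult ::
  "('g \<Rightarrow> 'g \<Rightarrow> 'g) \<Rightarrow> ('g \<Rightarrow> 'r \<Rightarrow> 'r) \<Rightarrow> ('r::comm_monoid_add \<Rightarrow> 'r \<Rightarrow> 'r)
   \<Rightarrow> ('g \<Rightarrow> 'r) \<Rightarrow> ('g \<Rightarrow> 'r) \<Rightarrow> ('g \<Rightarrow> 'r)" where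
  "bos_mult gm act m x y = (\<lambda>k. \<Sum>(g, h) \<in> {(g, h). gm g h = k}. m (x g) (act g (y h)))"

definition bos_antipode ::
  "('g \<Rightarrow> 'g \<Rightarrow> 'g) \<Rightarrow> 'g \<Rightarrow> ('g \<Rightarrow> 'g) \<Rightarrow> ('g \<Rightarrow> 'r \<Rightarrow> 'r) \<Rightarrow> ('g \<Rightarrow> 'r \<Rightarrow> 'r)
   \<Rightarrow> ('r::comm_monoid_add \<Rightarrow> 'r \<Rightarrow> 'r) \<Rightarrow> 'r \<Rightarrow> ('r \<Rightarrow> 'r) \<Rightarrow> ('g \<Rightarrow> 'r) \<Rightarrow> ('g \<Rightarrow> 'r)" where
  "bos_antipode gm ge gi act co m u S x =
     (\<Sum>h\<in>UNIV. \<Sum>g\<in>UNIV.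
        bos_mult gm act m (smash u (gm (gi h) (gi g))) (smash (S (co g (x h))) ge))"

inductive_set gen_subalg ::
  "('k \<Rightarrow> 'e::ab_group_add \<Rightarrow> 'e) \<Rightarrow> ('e \<Rightarrow> 'e \<Rightarrow> 'e) \<Rightarrow> 'e \<Rightarrow> 'e set \<Rightarrow> 'e set"
  for sc :: "'k \<Rightarrow> 'e \<Rightarrow> 'e" and mul :: "'e \<Rightarrow> 'e \<Rightarrow> 'e" and one :: 'e and G :: "'e set" where
  gen_one: "one \<in> gen_subalg sc mul one G"
| gen_gen: "x \<in> G \<Longrightarrow> x \<in> gen_subalg sc mul one G"
| gen_zero: "0 \<in> gen_subalg sc mul one G"
| gen_add: "x \<in> gen_subalg sc mul one G \<Longrightarrow> y \<in> gen_subalg sc mul one G \<Longrightarrow> x + y \<in> gen_subalg sc mul one G"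
| gen_scale: "x \<in> gen_subalg sc mul one G \<Longrightarrow> sc c x \<in> gen_subalg sc mul one G"
| gen_mul: "x \<in> gen_subalg sc mul one G \<Longrightarrow> y \<in> gen_subalg sc mul one G \<Longrightarrow> mul x y \<in> gen_subalg sc mul one G"

end

theory Submission
  imports Defs
begin
lemma lin_zero: "Vector_Spaces.linear s1 s2 f \<Longrightarrow> f 0 = 0"
  by (simp add: Vector_Spaces.linear_iff_module_hom module_hom.zero)
lemma lin_add: "Vector_Spaces.linear s1 s2 f \<Longrightarrow> f (x + y) = f x + f y"
  by (simp add: Vector_Spaces.linear_iff_module_hom module_hom.add)
lemma lin_scale: "Vector_Spaces.linear s1 s2 f \<Longrightarrow> f (s1 c x) = s2 c (f x)"
  by (simp add: Vector_Spaces.linear_iff_module_hom module_hom.scale)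
lemma lin_sum: "Vector_Spaces.linear s1 s2 f \<Longrightarrow> f (sum g A) = (\<Sum>a\<in>A. f (g a))"
  by (simp add: Vector_Spaces.linear_iff_module_hom module_hom.sum)

lemma smash_0[simp]: "smash 0 g = 0"
  by (simp add: smash_def fun_eq_iff)

lemma sum_if_const: "(\<Sum>x\<in>A. if P then f x else 0) = (if P then sum f A else 0)"
  by simp

lemma smash_app: "smash r g h = (if h = g then r else 0)"
  by (simp add: smash_def)

lemma bos_mult_smash:
  fixes m :: "'r::comm_monoid_add \<Rightarrow> 'r \<Rightarrow> 'r"
  assumes fin: "finite (UNIV :: 'g set)"
    and m0: "\<And>x. m x 0 = 0" and m0': "\<And>y. m 0 y = 0" and a0: "\<And>g. act g 0 = 0"
  shows "bos_mult gm act m (smash a (g::'g)) (smash b h) = smash (m a (act g b)) (gm g h)"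
proof (rule ext)
  fix k
  have fs: "finite {(g', h'). gm g' h' = k}"
    by (rule finite_subset[OF _ finite_cartesian_product[OF fin fin]]) auto
  have "bos_mult gm act m (smash a g) (smash b h) k =
        (\<Sum>p \<in> {(g', h'). gm g' h' = k}. if p = (g, h) then m a (act g b) else 0)"
    unfolding bos_mult_def
    by (rule sum.cong) (auto simp: smash_def m0 m0' a0 split: if_splits)
  also have "\<dots> = smash (m a (act g b)) (gm g h) k"
    using fs by (simp add: sum.delta' smash_def)
  finally show "bos_mult gm act m (smash a g) (smash b h) k = smash (m a (act g b)) (gm g h) k" .
qed

lemma antipode_smash:
  fixes m :: "'r::comm_monoid_add \<Rightarrow> 'r \<Rightarrow> 'r"
  assumes fin: "finite (UNIV :: 'g set)"
    and m0: "\<And>x. m x 0 = 0" and m0': "\<And>y. m 0 y = 0" and a0: "\<And>g. act g 0 = 0"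
    and c0: "\<And>g. co g 0 = 0" and S0: "S 0 = 0" and mu: "\<And>x. m u x = x"
    and coco: "\<And>g h r. co h (co g r) = (if g = h then co g r else 0)"
    and ge: "\<And>x. gm x ge = x"
  shows "bos_antipode gm ge gi act co m u S (smash (co g b) (h::'g)) =
         smash (act (gm (gi h) (gi g)) (S (co g b))) (gm (gi h) (gi g))"
proof -
  have "bos_antipode gm ge gi act co m u S (smash (co g b) h) =
     (\<Sum>h'\<in>UNIV. \<Sum>g'\<in>UNIV. if h' = h then (if g' = g then
         smash (act (gm (gi h) (gi g)) (S (co g b))) (gm (gi h) (gi g)) else 0) else 0)"
    unfolding bos_antipode_def
    by (intro sum.cong refl) (auto simp: bos_mult_smash[where m=m and act=act, OF fin m0 m0' a0] mu coco c0 S0 a0 ge smash_app)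
  also have "\<dots> = smash (act (gm (gi h) (gi g)) (S (co g b))) (gm (gi h) (gi g))"
    using fin by (simp add: sum.delta' sum_if_const)
  finally show ?thesis .
qed

lemma gen_sum:
  assumes "finite A" "\<And>x. x \<in> A \<Longrightarrow> f x \<in> gen_subalg sc mul one G"
  shows "sum f A \<in> gen_subalg sc mul one G"
  using assms by (induction A rule: finite_induct) (auto intro: gen_subalg.intros)

theorem mainTheorem10:
  fixes gm :: "'g \<Rightarrow> 'g \<Rightarrow> 'g" and ge :: 'g and gi :: "'g \<Rightarrow> 'g"
    and sR :: "'k::field \<Rightarrow> 'r::ab_group_add \<Rightarrow> 'r"
    and act :: "'g \<Rightarrow> 'r \<Rightarrow> 'r" and co :: "'g \<Rightarrow> 'r \<Rightarrow> 'r"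
    and m :: "'r \<Rightarrow> 'r \<Rightarrow> 'r" and u :: 'r
    and sRR :: "'k \<Rightarrow> 'rr::ab_group_add \<Rightarrow> 'rr" and t :: "'r \<Rightarrow> 'r \<Rightarrow> 'rr"
    and sRRR :: "'k \<Rightarrow> 'rrr::ab_group_add \<Rightarrow> 'rrr" and t3 :: "'rr \<Rightarrow> 'r \<Rightarrow> 'rrr"
    and \<Delta> :: "'r \<Rightarrow> 'rr" and \<epsilon> :: "'r \<Rightarrow> 'k" and S :: "'r \<Rightarrow> 'r"
    and sE :: "'k \<Rightarrow> 'e::ab_group_add \<Rightarrow> 'e" and tE :: "('g \<Rightarrow> 'r) \<Rightarrow> ('g \<Rightarrow> 'r) \<Rightarrow> 'e"
    and DA :: "'g \<Rightarrow> 'rr \<Rightarrow> 'e" and IS :: "'e \<Rightarrow> 'e" and mE :: "'e \<Rightarrow> 'e \<Rightarrow> 'e"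
  assumes R: "braided_Hopf_YD gm ge gi sR act co m u sRR t sRRR t3 \<Delta> \<epsilon> S"
    \<comment> \<open>A \<otimes> A (= A^e as a vector space)\<close>
    and tensE: "is_tensor (scA sR) (scA sR) sE tE"
    \<comment> \<open>the linear maps R \<otimes> R \<rightarrow> A \<otimes> A, a \<otimes> b \<mapsto> \<Sum>_g (a # gh) \<otimes> (b_g # h), used to define \<Delta>_A(r # h)\<close>
    and DA_lin: "\<And>h. Vector_Spaces.linear sRR sE (DA h)"
    and DA_t: "\<And>h a b. DA h (t a b) = (\<Sum>g\<in>UNIV. tE (smash a (gm g h)) (smash (co g b) h))"
    \<comment> \<open>id \<otimes> S_A on A \<otimes> A\<close>
    and IS_lin: "Vector_Spaces.linear sE sE IS"
    and IS_t: "\<And>x y. IS (tE x y) = tE x (bos_antipode gm ge gi act co m u S y)"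
    \<comment> \<open>multiplication of A^e = A \<otimes> A^op\<close>
    and mE_bilin: "bilin sE sE sE mE"
    and mE_t: "\<And>x y x' y'. mE (tE x y) (tE x' y') =
                  tE (bos_mult gm act m x x') (bos_mult gm act m y' y)"
  shows
    "let \<Delta>A = (\<lambda>x. \<Sum>h\<in>UNIV. DA h (\<Delta> (x h)));
         \<rho> = (\<lambda>x. IS (\<Delta>A x));
         \<D> = gen_subalg sE mE (tE (smash u ge) (smash u ge))
               {tE (smash r g) (smash s (gi g)) | r s g. True}
     in (\<forall>a d. d \<in> \<D> \<longrightarrow> mE (\<rho> a) d \<in> \<D>) \<and> (\<forall>a d. d \<in> \<D> \<longrightarrow> mE d (\<rho> a) \<in> \<D>)"
proof -
  have fin: "finite (UNIV :: 'g set)" using R unfolding braided_Hopf_YD_def by blast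
  have grp: "group gm ge gi" using R unfolding braided_Hopf_YD_def by blast
  have YD: "YD_module gm ge gi sR act co" using R unfolding braided_Hopf_YD_def by blast
  have linS: "Vector_Spaces.linear sR sR S" using R unfolding braided_Hopf_YD_def by blast
  have bil: "bilin sR sR sR m" using R unfolding braided_Hopf_YD_def by blast
  have unit0: "\<forall>x. m u x = x \<and> m x u = x" using R unfolding braided_Hopf_YD_def by (elim conjE) assumption
  have unit: "\<And>x. m u x = x" using unit0 by blast
  have tensR: "is_tensor sR sR sRR t" using R unfolding braided_Hopf_YD_def by blast
  have linco: "\<And>g. Vector_Spaces.linear sR sR (co g)" using YD unfolding YD_module_def by blast
  have linact: "\<And>g. Vector_Spaces.linear sR sR (act g)" using YD unfolding YD_module_def by blast
  have coco: "\<And>g h r. co h (co g r) = (if g = h then co g r else 0)" using YD unfolding YD_module_def by blast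
  have m0: "\<And>x. m x 0 = 0" using bil unfolding bilin_def by (blast intro: lin_zero)
  have m0': "\<And>y. m 0 y = 0"
  proof -
    fix y have "Vector_Spaces.linear sR sR (\<lambda>x. m x y)" using bil unfolding bilin_def by blast
    from lin_zero[OF this] show "m 0 y = 0" .
  qed
  have a0: "\<And>g. act g 0 = 0" using linact by (blast intro: lin_zero)
  have c0: "\<And>g. co g 0 = 0" using linco by (blast intro: lin_zero)
  have S0: "S 0 = 0" using linS by (rule lin_zero)
  interpret G: group gm ge gi by (rule grp)
  have gee: "\<And>x. gm x ge = x" by (rule G.right_neutral)
  have ginv: "\<And>a b. gi (gm a b) = gm (gi b) (gi a)" by (rule G.inverse_distrib_swap)
  have vsRR: "vector_space sRR" and spanRR: "module.span sRR (case_prod t ` UNIV) = UNIV"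
    using tensR unfolding is_tensor_def by blast+
  have modRR: "module sRR" using vsRR by (simp add: vector_space_def module_def)
  define D where "D = gen_subalg sE mE (tE (smash u ge) (smash u ge))
               {tE (smash r g) (smash s (gi g)) | r s g. True}"
  have gen: "\<And>r s g. tE (smash r g) (smash s (gi g)) \<in> D"
    unfolding D_def by (rule gen_subalg.gen_gen) blast
  have Dsum: "\<And>f A. finite A \<Longrightarrow> (\<And>x. x \<in> A \<Longrightarrow> f x \<in> D) \<Longrightarrow> sum f A \<in> D"
    unfolding D_def by (rule gen_sum)
  have Dadd: "\<And>x y. x \<in> D \<Longrightarrow> y \<in> D \<Longrightarrow> x + y \<in> D"
    unfolding D_def by (rule gen_subalg.gen_add)
  have Dsc: "\<And>c x. x \<in> D \<Longrightarrow> sE c x \<in> D"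
    unfolding D_def by (rule gen_subalg.gen_scale)
  have D0: "0 \<in> D" unfolding D_def by (rule gen_subalg.gen_zero)
  have Dmul: "\<And>x y. x \<in> D \<Longrightarrow> y \<in> D \<Longrightarrow> mE x y \<in> D"
    unfolding D_def by (rule gen_subalg.gen_mul)
  have gent: "IS (DA h (t a b)) \<in> D" for h a b
  proof -
    have "IS (DA h (t a b)) = (\<Sum>g\<in>UNIV. IS (tE (smash a (gm g h)) (smash (co g b) h)))"
      by (simp add: DA_t lin_sum[OF IS_lin])
    also have "\<dots> = (\<Sum>g\<in>UNIV. tE (smash a (gm g h))
          (smash (act (gm (gi h) (gi g)) (S (co g b))) (gi (gm g h))))"
      by (simp add: IS_t antipode_smash[where m=m and act=act and co=co and S=S and u=u and gm=gm and ge=ge, OF fin m0 m0' a0 c0 S0 unit coco gee] ginv)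
    also have "\<dots> \<in> D" using fin by (intro Dsum gen)
    finally show ?thesis .
  qed
  have genv: "IS (DA h v) \<in> D" for h v
  proof -
    have "v \<in> module.span sRR (case_prod t ` UNIV)" using spanRR by simp
    then show ?thesis
    proof (rule module.span_induct_alt[OF modRR, where h="\<lambda>v. IS (DA h v) \<in> D"])
      show "IS (DA h 0) \<in> D" using D0 lin_zero[OF DA_lin] lin_zero[OF IS_lin] by simp
    next
      fix c x y assume xS: "x \<in> case_prod t ` UNIV" and yD: "IS (DA h y) \<in> D"
      then obtain a b where x: "x = t a b" by auto
      have "IS (DA h (sRR c x + y)) = sE c (IS (DA h x)) + IS (DA h y)"
        by (simp add: lin_add[OF DA_lin] lin_add[OF IS_lin] lin_scale[OF DA_lin] lin_scale[OF IS_lin])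
      then show "IS (DA h (sRR c x + y)) \<in> D" using yD x gent Dadd Dsc by simp
    qed
  qed
  have rho: "IS (\<Sum>h\<in>UNIV. DA h (\<Delta> (a h))) \<in> D" for a
    using fin by (simp add: lin_sum[OF IS_lin] Dsum genv)
  show ?thesis
    unfolding Let_def D_def[symmetric] using rho Dmul by blast
qed

end
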